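(* Let $n\ge1$, $k\ge1$, and let $((i_1\,j_1),\dots,(i_k\,j_k))\in(\mathsf T_n)^k$ (with $i_l<j_l$ for all $l$) satisfy $i_1\le i_2\le\dots\le i_k$. The following are equivalent: 1. $((i_1\,j_1),\dots,(i_k\,j_k))\in\Sigma_n(k)$. 2. For all $l,m\in\{1,\dots,k\}$ with $l<m$, either $j_l\le i_m$ or $j_l>j_m$.
   Context: Let $n\ge1$. $\mathfrak S_n$ is the symmetric group on $\{1,\dots,n\}$; products of permutations are composed from right to left. $\mathsf T_n$ denotes the set of transpositions; a transposition is always written $(i\,j)$ with $i<j$. For $\sigma\in\mathfrak S_n$, $\ell(\sigma)$ is the number of cycles of $\sigma$ (fixed points counted) and $|\sigma|=n-\ell(\sigma)$. Write $\sigma_1\preccurlyeq\sigma_2$ iff $|\sigma_2|=|\sigma_1|+|\sigma_1^{-1}\sigma_2|$. For $k\ge0$, $\Sigma_n(k)=\{(\tau_1,\dots,\tau_k)\in(\mathsf T_n)^k : |\tau_1\cdots\tau_k|=k,\ \tau_1\cdots\tau_k\preccurlyeq(1\,2\,\dots\,n)\}$. *)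

theory Defs
  imports "HOL-Combinatorics.Combinatorics"
begin

text \<open>Permutations of {1..n} are represented as functions nat => nat (identity outside {1..n}).
  Products compose right to left, i.e. sigma1 sigma2 = sigma1 o sigma2.\<close>

definition is_transp :: "nat \<Rightarrow> nat \<times> nat \<Rightarrow> bool" where
  "is_transp n t \<longleftrightarrow> 1 \<le> fst t \<and> fst t < snd t \<and> snd t \<le> n"

definition transp_perm :: "nat \<times> nat \<Rightarrow> nat \<Rightarrow> nat" where
  "transp_perm t = transpose (fst t) (snd t)"

definition prod_transps :: "(nat \<times> nat) list \<Rightarrow> nat \<Rightarrow> nat" where
  "prod_transps ts = foldr (\<lambda>t acc. transp_perm t \<circ> acc) ts id"

definition num_cycles :: "nat \<Rightarrow> (nat \<Rightarrow> nat) \<Rightarrow> nat" where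
  "num_cycles n \<sigma> = card (orbit \<sigma> ` {1..n})"

definition perm_len :: "nat \<Rightarrow> (nat \<Rightarrow> nat) \<Rightarrow> nat" where
  "perm_len n \<sigma> = n - num_cycles n \<sigma>"

definition perm_le :: "nat \<Rightarrow> (nat \<Rightarrow> nat) \<Rightarrow> (nat \<Rightarrow> nat) \<Rightarrow> bool" where
  "perm_le n \<sigma>1 \<sigma>2 \<longleftrightarrow> perm_len n \<sigma>2 = perm_len n \<sigma>1 + perm_len n (inv \<sigma>1 \<circ> \<sigma>2)"

definition long_cycle :: "nat \<Rightarrow> nat \<Rightarrow> nat" where
  "long_cycle n i = (if 1 \<le> i \<and> i < n then i + 1 else if i = n then 1 else i)"

definition Sigma_n :: "nat \<Rightarrow> nat \<Rightarrow> (nat \<times> nat) list set" where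
  "Sigma_n n k = {ts. length ts = k \<and> (\<forall>t\<in>set ts. is_transp n t)
       \<and> perm_len n (prod_transps ts) = k
       \<and> perm_le n (prod_transps ts) (long_cycle n)}"

end

theory Submission
  imports Defs
begin

lemma orbit_perm_eq:
  assumes "permutation f" "y \<in> orbit f x" shows "orbit f y = orbit f x"
proof
  show "orbit f y \<subseteq> orbit f x" using assms(2) orbit_trans by fast
  have "x \<in> orbit f y" using orbit_swap[OF permutation_self_in_orbit[OF assms(1)] assms(2)] .
  then show "orbit f x \<subseteq> orbit f y" using orbit_trans by fast
qed

lemma cover_orbit:
  assumes "\<sigma>' = transpose a b \<circ> \<sigma>" "permutation \<sigma>'"
  shows "z \<in> orbit \<sigma> y \<Longrightarrow> z \<in> orbit \<sigma>' y \<union> orbit \<sigma>' a \<union> orbit \<sigma>' b"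
proof (induction rule: orbit.induct)
  case base
  then show ?case
  proof (cases "\<sigma> y = a \<or> \<sigma> y = b")
    case True then show ?thesis using permutation_self_in_orbit[OF assms(2)] by auto
  next
    case False
    then have "\<sigma>' y = \<sigma> y" by (simp add: assms(1))
    then show ?thesis by (metis Un_iff orbit.base)
  qed
next
  case (step z)
  show ?case
  proof (cases "\<sigma> z = a \<or> \<sigma> z = b")
    case True then show ?thesis using permutation_self_in_orbit[OF assms(2)] by auto
  next
    case False
    then have "\<sigma>' z = \<sigma> z" by (simp add: assms(1))
    with step.IH show ?thesis by (metis Un_iff orbit.step)
  qed
qed

lemma merge_path:
  assumes "\<sigma>' = transpose a b \<circ> \<sigma>" "permutation \<sigma>" "b \<notin> orbit \<sigma> a" "a \<noteq> b"
  shows "b \<in> orbit \<sigma>' a"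
proof -
  have bij: "bij \<sigma>" using assms(2) permutation_bijective by blast
  define p where "p = inv \<sigma> a"
  have sp: "\<sigma> p = a" using bij by (simp add: p_def bij_is_surj surj_f_inv_f)
  have "p \<in> orbit (inv \<sigma>) a" unfolding p_def by (rule orbit.base)
  then have "p \<in> orbit \<sigma> a" using orbit_inv_eq[OF assms(2)] by simp
  then have "\<exists>j. (\<sigma> ^^ j) a = p" using orbit_altdef_permutation[OF assms(2)] by auto
  define j where "j = (LEAST j. (\<sigma> ^^ j) a = p)"
  have jp: "(\<sigma> ^^ j) a = p" unfolding j_def by (rule LeastI_ex) fact
  have jl: "\<And>i. i < j \<Longrightarrow> (\<sigma> ^^ i) a \<noteq> p" unfolding j_def using not_less_Least by blast
  have eq: "i \<le> j \<Longrightarrow> (\<sigma>' ^^ i) a = (\<sigma> ^^ i) a" for i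
  proof (induction i)
    case 0 then show ?case by simp
  next
    case (Suc i)
    then have ih: "(\<sigma>' ^^ i) a = (\<sigma> ^^ i) a" by simp
    have ne: "(\<sigma> ^^ i) a \<noteq> p" using jl Suc.prems by simp
    have n1: "\<sigma> ((\<sigma> ^^ i) a) \<noteq> a" using ne sp bij by (metis bij_pointE)
    have "\<sigma> ((\<sigma> ^^ i) a) \<in> orbit \<sigma> a"
      using funpow_in_orbit[OF orbit.base[of \<sigma> a], of i] by (simp add: funpow_swap1)
    then have n2: "\<sigma> ((\<sigma> ^^ i) a) \<noteq> b" using assms(3) by auto
    have "(\<sigma>' ^^ Suc i) a = \<sigma>' ((\<sigma> ^^ i) a)" using ih by simp
    also have "\<dots> = \<sigma> ((\<sigma> ^^ i) a)" using n1 n2 by (simp add: assms(1))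
    finally show ?case by simp
  qed
  have "(\<sigma>' ^^ Suc j) a = b" using eq[of j] jp sp by (simp add: assms(1))
  then show ?thesis unfolding orbit_altdef by blast
qed

lemma count_G:
  assumes perm: "\<sigma> permutes S" and fin: "finite S" and ab: "a \<in> S" "b \<in> S" "a \<noteq> b"
    and s': "\<sigma>' = transpose a b \<circ> \<sigma>"
  shows "card (orbit \<sigma>' ` S) \<le> card (orbit \<sigma> ` S) + 1"
    and "b \<notin> orbit \<sigma> a \<Longrightarrow> card (orbit \<sigma>' ` S) + 1 \<le> card (orbit \<sigma> ` S)"
proof -
  have ps: "permutation \<sigma>" using perm fin permutation_permutes by blast
  have ps': "permutation \<sigma>'" unfolding s'
    using permutes_compose[OF perm permutes_swap_id[OF ab(1,2)]] fin permutation_permutes by blast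
  define Ob where "Ob = orbit \<sigma> a \<union> orbit \<sigma> b"
  define X0 where "X0 = orbit \<sigma> ` (S - Ob)"
  have finX0: "finite X0" unfolding X0_def using fin by simp
  have h1: "orbit \<sigma>' x = orbit \<sigma> x" if x: "x \<in> S - Ob" for x
  proof (rule orbit_cong)
    show "x \<in> orbit \<sigma> x" using permutation_self_in_orbit[OF ps] .
    fix s assume s: "s \<in> orbit \<sigma> x"
    have ss: "\<sigma> s \<in> orbit \<sigma> x" using s by (rule orbit.step)
    have "\<sigma> s \<noteq> a"
    proof
      assume "\<sigma> s = a"
      then have "orbit \<sigma> a = orbit \<sigma> x" using orbit_perm_eq[OF ps] ss by metis
      then show False using x permutation_self_in_orbit[OF ps, of x] unfolding Ob_def by auto
    qed
    moreover have "\<sigma> s \<noteq> b"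
    proof
      assume "\<sigma> s = b"
      then have "orbit \<sigma> b = orbit \<sigma> x" using orbit_perm_eq[OF ps] ss by metis
      then show False using x permutation_self_in_orbit[OF ps, of x] unfolding Ob_def by auto
    qed
    ultimately show "\<sigma>' s = \<sigma> s" by (simp add: s')
  qed
  have h2: "orbit \<sigma>' x \<in> {orbit \<sigma>' a, orbit \<sigma>' b}" if x: "x \<in> Ob" for x
  proof -
    have "x \<in> orbit \<sigma>' a \<union> orbit \<sigma>' b"
      using x cover_orbit[OF s' ps', of x a] cover_orbit[OF s' ps', of x b] unfolding Ob_def by auto
    then show ?thesis using orbit_perm_eq[OF ps'] by blast
  qed
  have sub: "orbit \<sigma>' ` S \<subseteq> X0 \<union> {orbit \<sigma>' a, orbit \<sigma>' b}"
  proof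
    fix Y assume "Y \<in> orbit \<sigma>' ` S"
    then obtain x where x: "x \<in> S" "Y = orbit \<sigma>' x" by blast
    show "Y \<in> X0 \<union> {orbit \<sigma>' a, orbit \<sigma>' b}"
    proof (cases "x \<in> Ob")
      case True then show ?thesis using h2 x by auto
    next
      case False then show ?thesis using h1 x unfolding X0_def by auto
    qed
  qed
  have na: "orbit \<sigma> a \<notin> X0" and nb: "orbit \<sigma> b \<notin> X0"
    unfolding X0_def Ob_def using permutation_self_in_orbit[OF ps] by auto
  have OS: "Ob \<subseteq> S" unfolding Ob_def using permutes_orbit_subset[OF perm] ab by auto
  have up: "X0 \<union> {orbit \<sigma> a, orbit \<sigma> b} \<subseteq> orbit \<sigma> ` S"
    unfolding X0_def using ab by auto
  have c1: "card (orbit \<sigma> ` S) \<ge> card X0 + 1"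
  proof -
    have "card (X0 \<union> {orbit \<sigma> a}) \<le> card (orbit \<sigma> ` S)"
      using up fin by (intro card_mono) auto
    then show ?thesis using na finX0 by simp
  qed
  have c2: "card (orbit \<sigma>' ` S) \<le> card X0 + 2"
  proof -
    have "card (orbit \<sigma>' ` S) \<le> card (X0 \<union> {orbit \<sigma>' a, orbit \<sigma>' b})"
      using sub finX0 by (intro card_mono) auto
    also have "\<dots> \<le> card X0 + card {orbit \<sigma>' a, orbit \<sigma>' b}" by (rule card_Un_le)
    also have "\<dots> \<le> card X0 + 2" by (simp add: card_insert_le_m1)
    finally show ?thesis .
  qed
  show "card (orbit \<sigma>' ` S) \<le> card (orbit \<sigma> ` S) + 1" using c1 c2 by simp
  assume nob: "b \<notin> orbit \<sigma> a"
  have bo: "b \<in> orbit \<sigma>' a" by (rule merge_path[OF s' ps nob ab(3)])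
  then have "orbit \<sigma>' b = orbit \<sigma>' a" using orbit_perm_eq[OF ps'] by blast
  then have "orbit \<sigma>' ` S \<subseteq> X0 \<union> {orbit \<sigma>' a}" using sub by auto
  then have "card (orbit \<sigma>' ` S) \<le> card (X0 \<union> {orbit \<sigma>' a})"
    using finX0 by (intro card_mono) auto
  also have "\<dots> \<le> card X0 + 1" using finX0 by (simp add: card_insert_if)
  finally have c3: "card (orbit \<sigma>' ` S) \<le> card X0 + 1" .
  have dif: "orbit \<sigma> a \<noteq> orbit \<sigma> b" using nob permutation_self_in_orbit[OF ps, of b] by auto
  have "card (X0 \<union> {orbit \<sigma> a, orbit \<sigma> b}) \<le> card (orbit \<sigma> ` S)"
    using up fin by (intro card_mono) auto
  then have c4: "card (orbit \<sigma> ` S) \<ge> card X0 + 2" using na nb dif finX0 by simp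
  show "card (orbit \<sigma>' ` S) + 1 \<le> card (orbit \<sigma> ` S)" using c3 c4 by simp
qed

definition nxt :: "nat set \<Rightarrow> nat \<Rightarrow> nat" where
  "nxt A x = (if \<exists>y\<in>A. x < y then Min {y\<in>A. x < y} else Min A)"

lemma nxt_in: "finite A \<Longrightarrow> A \<noteq> {} \<Longrightarrow> nxt A x \<in> A"
proof (cases "\<exists>y\<in>A. x < y")
  case True
  assume "finite A"
  then have "Min {y\<in>A. x < y} \<in> {y\<in>A. x < y}" using True by (intro Min_in) auto
  then show ?thesis using True by (simp add: nxt_def)
qed (auto simp: nxt_def intro!: Min_in)

lemma orbit_nxt:
  fixes f :: "nat \<Rightarrow> nat" and cls :: "nat \<Rightarrow> nat set"
  assumes fin: "finite S"
    and c1: "\<And>x. x \<in> S \<Longrightarrow> x \<in> cls x" and c2: "\<And>x. x \<in> S \<Longrightarrow> cls x \<subseteq> S"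
    and c3: "\<And>x y. x \<in> S \<Longrightarrow> y \<in> cls x \<Longrightarrow> cls y = cls x"
    and f: "\<And>x. x \<in> S \<Longrightarrow> f x = nxt (cls x) x"
    and x: "x \<in> S"
  shows "orbit f x = cls x"
proof
  have finc: "finite (cls x)" using c2 x fin finite_subset by blast
  show "orbit f x \<subseteq> cls x"
  proof
    fix z assume "z \<in> orbit f x"
    then show "z \<in> cls x"
    proof induction
      case base then show ?case using f[OF x] nxt_in[OF finc] c1[OF x] by auto
    next
      case (step y)
      have yS: "y \<in> S" using step.IH c2 x by auto
      have "cls y = cls x" using c3 x step.IH by blast
      then show ?case using f[OF yS] nxt_in[OF finc] c1[OF x] by auto
    qed
  qed
  define A where "A = cls x"
  have finA: "finite A" and neA: "A \<noteq> {}" using finc c1 x by (auto simp: A_def)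
  have AS: "A \<subseteq> S" using c2 x A_def by auto
  have fA: "\<And>z. z \<in> A \<Longrightarrow> f z = nxt A z"
  proof -
    fix z assume z: "z \<in> A"
    then have "z \<in> S" using AS by auto
    moreover have "cls z = A" using c3[OF x] z A_def by auto
    ultimately show "f z = nxt A z" using f by auto
  qed
  have step1: "Min A \<in> orbit f z" if "z \<in> A" for z
    using that
  proof (induction "Max A - z" arbitrary: z rule: less_induct)
    case less
    show ?case
    proof (cases "\<exists>y\<in>A. z < y")
      case False
      then have "f z = Min A" using fA[OF less.prems] by (simp add: nxt_def)
      then show ?thesis using orbit.base[of f z] by simp
    next
      case True
      define z' where "z' = Min {y\<in>A. z < y}"
      have z'in: "z' \<in> {y\<in>A. z < y}" unfolding z'_def using True finA by (intro Min_in) auto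
      have fz: "f z = z'" using fA[OF less.prems] True by (simp add: nxt_def z'_def)
      have "z' \<le> Max A" using z'in finA by auto
      then have "Max A - z' < Max A - z" using z'in by auto
      then have "Min A \<in> orbit f z'" using less.hyps z'in by blast
      then have "Min A \<in> orbit f (f z)" using fz by simp
      then show ?thesis by (rule orbit_subset)
    qed
  qed
  have step2: "y \<in> orbit f (Min A)" if "y \<in> A" for y
    using that
  proof (induction y rule: less_induct)
    case (less y)
    show ?case
    proof (cases "y = Min A")
      case True then show ?thesis using step1 Min_in[OF finA neA] by simp
    next
      case False
      moreover have "Min A \<le> y" using less.prems finA by (intro Min_le)
      ultimately have yg: "Min A < y" by simp
      define w where "w = Max {z\<in>A. z < y}"
      have win: "w \<in> {z\<in>A. z < y}" unfolding w_def using yg finA Min_in[OF finA neA]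
        by (intro Max_in) auto
      have wmax: "\<And>z. z \<in> A \<Longrightarrow> z < y \<Longrightarrow> z \<le> w" unfolding w_def using finA by auto
      have "Min {u\<in>A. w < u} = y"
      proof (rule Min_eqI)
        show "finite {u\<in>A. w < u}" using finA by auto
        show "y \<in> {u\<in>A. w < u}" using less.prems win by auto
        fix u assume "u \<in> {u\<in>A. w < u}"
        then have "u \<in> A" "w < u" by auto
        then show "y \<le> u" using wmax[of u] by (cases "u < y") auto
      qed
      then have fw: "f w = y" using fA win less.prems by (auto simp: nxt_def)
      have "w \<in> orbit f (Min A)" using less.IH win by blast
      then have "f w \<in> orbit f (Min A)" by (rule orbit.step)
      then show ?thesis using fw by simp
    qed
  qed
  show "cls x \<subseteq> orbit f x"
  proof
    fix y assume "y \<in> cls x"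
    then have "y \<in> orbit f (Min A)" using step2 A_def by blast
    moreover have "Min A \<in> orbit f x" using step1 c1 x A_def by blast
    ultimately show "y \<in> orbit f x" by (rule orbit_trans)
  qed
qed

lemma nxt_E: "finite C \<Longrightarrow> z \<in> C \<Longrightarrow> x < z \<Longrightarrow> nxt C x \<in> C \<and> x < nxt C x \<and> nxt C x \<le> z"
proof -
  assume f: "finite C" "z \<in> C" "x < z"
  then have "Min {y\<in>C. x < y} \<in> {y\<in>C. x < y}" by (intro Min_in) auto
  moreover have "Min {y\<in>C. x < y} \<le> z" using f by (intro Min_le) auto
  ultimately show ?thesis using f by (auto simp: nxt_def)
qed

lemma nxt_eqI: "finite C \<Longrightarrow> y \<in> C \<Longrightarrow> x < y \<Longrightarrow> (\<And>z. z \<in> C \<Longrightarrow> x < z \<Longrightarrow> y \<le> z) \<Longrightarrow> nxt C x = y"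
  unfolding nxt_def by (auto intro!: Min_eqI)

lemma nxt_N: "finite C \<Longrightarrow> \<forall>z\<in>C. z \<le> x \<Longrightarrow> nxt C x = Min C"
  unfolding nxt_def by (auto simp: not_less)

lemma nxt_split:
  fixes C :: "nat set"
  assumes fin: "finite C" and ab: "a \<in> C" "b \<in> C" "a < b" and x: "x \<in> C"
  shows "transpose a b (nxt C x) = nxt (if x \<in> {a..<b} then C \<inter> {a..<b} else C - {a..<b}) x"
proof -
  define y where "y = nxt C x"
  have fin1: "finite (C \<inter> {a..<b})" "finite (C - {a..<b})" using fin by auto
  show ?thesis
  proof (cases "x \<in> {a..<b}")
    case True
    then have xa: "a \<le> x" "x < b" by auto
    have Ti: "(if x \<in> {a..<b} then C \<inter> {a..<b} else C - {a..<b}) = C \<inter> {a..<b}" using True by simp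
    have E: "y \<in> C" "x < y" "y \<le> b" using nxt_E[OF fin ab(2) xa(2)] y_def by auto
    have yle: "\<And>z. z \<in> C \<Longrightarrow> x < z \<Longrightarrow> y \<le> z"
      using fin y_def by (auto simp: nxt_def intro!: Min_le)
    show ?thesis
    proof (cases "y = b")
      case False
      then have "transpose a b y = y" using E xa by auto
      moreover have "nxt (C \<inter> {a..<b}) x = y"
        using E False xa yle by (intro nxt_eqI fin1) auto
      ultimately show ?thesis unfolding Ti using y_def by simp
    next
      case yb: True
      have "nxt (C \<inter> {a..<b}) x = Min (C \<inter> {a..<b})"
      proof (intro nxt_N fin1 ballI)
        fix z assume "z \<in> C \<inter> {a..<b}"
        then show "z \<le> x" using yle[of z] yb by (cases "x < z") auto
      qed
      also have "\<dots> = a" using ab by (intro Min_eqI fin1) auto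
      finally show ?thesis unfolding Ti using y_def yb by simp
    qed
  next
    case False
    note F = False
    have Fi: "(if x \<in> {a..<b} then C \<inter> {a..<b} else C - {a..<b}) = C - {a..<b}" using F by (simp only: if_False)
    show ?thesis
    proof (cases "x < a")
      case True
      have E: "y \<in> C" "x < y" "y \<le> a" using nxt_E[OF fin ab(1) True] y_def by auto
      have yle: "\<And>z. z \<in> C \<Longrightarrow> x < z \<Longrightarrow> y \<le> z"
        using fin y_def by (auto simp: nxt_def intro!: Min_le)
      show ?thesis
      proof (cases "y = a")
        case False
        then have "transpose a b y = y" using E ab by auto
        moreover have "nxt (C - {a..<b}) x = y"
          using E False yle by (intro nxt_eqI fin1) auto
        ultimately show ?thesis unfolding Fi using y_def by simp
      next
        case ya: True
        have "nxt (C - {a..<b}) x = b"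
        proof (intro nxt_eqI fin1)
          fix z assume "z \<in> C - {a..<b}" "x < z"
          then show "b \<le> z" using yle[of z] ya by auto
        qed (use ab True in auto)
        then show ?thesis unfolding Fi using y_def ya by simp
      qed
    next
      case False
      then have xb: "b \<le> x" using F by auto
      show ?thesis
      proof (cases "\<exists>z\<in>C. x < z")
        case True
        then obtain z where z: "z \<in> C" "x < z" by auto
        have E: "y \<in> C" "x < y" using nxt_E[OF fin z] y_def by auto
        have yle: "\<And>z. z \<in> C \<Longrightarrow> x < z \<Longrightarrow> y \<le> z"
          using fin y_def by (auto simp: nxt_def intro!: Min_le)
        have "transpose a b y = y" using E xb ab by auto
        moreover have "nxt (C - {a..<b}) x = y"
          using E xb yle by (intro nxt_eqI fin1) auto
        ultimately show ?thesis unfolding Fi using y_def by simp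
      next
        case False
        then have yN: "y = Min C" using nxt_N[OF fin] y_def by (auto simp: not_less)
        have ymin: "\<And>z. z \<in> C \<Longrightarrow> y \<le> z" using yN fin by auto
        have yC: "y \<in> C" using yN fin x by (auto intro: Min_in)
        have ya: "y \<le> a" using ymin ab by auto
        have N': "nxt (C - {a..<b}) x = Min (C - {a..<b})"
          using False by (intro nxt_N fin1) (auto simp: not_less)
        show ?thesis
        proof (cases "y = a")
          case False
          then have "transpose a b y = y" using ya ab by auto
          moreover have "Min (C - {a..<b}) = y"
            using yC ya False ymin by (intro Min_eqI fin1) auto
          ultimately show ?thesis unfolding Fi using y_def N' by simp
        next
          case True
          have "Min (C - {a..<b}) = b"
          proof (intro Min_eqI fin1)
            fix z assume "z \<in> C - {a..<b}"
            then show "b \<le> z" using ymin[of z] True by auto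
          qed (use ab in auto)
          then show ?thesis unfolding Fi using y_def N' True by simp
        qed
      qed
    qed
  qed
qed

definition Iv :: "nat \<times> nat \<Rightarrow> nat set" where "Iv t = {fst t..<snd t}"

definition cls :: "nat \<Rightarrow> (nat\<times>nat) list \<Rightarrow> nat \<Rightarrow> nat \<Rightarrow> nat set" where
  "cls n ts m x = {y \<in> {1..n}. \<forall>l<m. (x \<in> Iv (ts!l) \<longleftrightarrow> y \<in> Iv (ts!l))}"

definition Qf :: "(nat\<times>nat) list \<Rightarrow> nat \<Rightarrow> nat \<Rightarrow> nat \<Rightarrow> nat" where
  "Qf ts n m = foldl (\<lambda>acc t. transp_perm t \<circ> acc) (long_cycle n) (take m ts)"

definition condC :: "(nat\<times>nat) list \<Rightarrow> nat \<Rightarrow> bool" where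
  "condC ts m = (\<forall>l j. l < j \<and> j < m \<longrightarrow> snd (ts!l) \<le> fst (ts!j) \<or> snd (ts!j) < snd (ts!l))"

lemma cls1: "x \<in> {1..n} \<Longrightarrow> x \<in> cls n ts m x" by (simp add: cls_def)
lemma cls2: "cls n ts m x \<subseteq> {1..n}" by (auto simp: cls_def)
lemma iff_all_trans: "\<forall>l<m. (P l \<longleftrightarrow> Q l) \<Longrightarrow> (\<forall>l<m. (Q l \<longleftrightarrow> R l)) \<longleftrightarrow> (\<forall>l<m. (P l \<longleftrightarrow> R l))"
proof (rule iffI; intro allI impI)
  fix l assume "\<forall>l<m. (P l \<longleftrightarrow> Q l)" "\<forall>l<m. (Q l \<longleftrightarrow> R l)" "l < m"
  then have "P l \<longleftrightarrow> Q l" "Q l \<longleftrightarrow> R l" by auto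
  then show "P l \<longleftrightarrow> R l" by simp
next
  fix l assume "\<forall>l<m. (P l \<longleftrightarrow> Q l)" "\<forall>l<m. (P l \<longleftrightarrow> R l)" "l < m"
  then have "P l \<longleftrightarrow> Q l" "P l \<longleftrightarrow> R l" by auto
  then show "Q l \<longleftrightarrow> R l" by simp
qed

lemma cls3: "y \<in> cls n ts m x \<Longrightarrow> cls n ts m y = cls n ts m x"
proof -
  assume "y \<in> cls n ts m x"
  then have H: "\<forall>l<m. (x \<in> Iv (ts!l) \<longleftrightarrow> y \<in> Iv (ts!l))" by (simp add: cls_def)
  have "\<forall>z. (\<forall>l<m. (y \<in> Iv (ts!l) \<longleftrightarrow> z \<in> Iv (ts!l))) \<longleftrightarrow> (\<forall>l<m. (x \<in> Iv (ts!l) \<longleftrightarrow> z \<in> Iv (ts!l)))"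
    by (intro allI) (rule iff_all_trans[OF H])
  then show ?thesis unfolding cls_def by simp
qed
lemma cls_fin: "finite (cls n ts m x)" by (rule finite_subset[OF cls2]) simp

lemma cls_Suc: "cls n ts (Suc m) x = (if x \<in> Iv (ts!m) then cls n ts m x \<inter> Iv (ts!m) else cls n ts m x - Iv (ts!m))"
  by (auto simp: cls_def less_Suc_eq)

lemma Qf_Suc: "m < length ts \<Longrightarrow> Qf ts n (Suc m) = transp_perm (ts!m) \<circ> Qf ts n m"
  by (simp add: Qf_def take_Suc_conv_app_nth)

lemma lc_inv: assumes n: "1 \<le> n" and g: "\<And>i. g i = (if 1 < i \<and> i \<le> n then i - 1 else if i = 1 then n else i)"
  shows "g (long_cycle n x) = x" "long_cycle n (g x) = x"
  using n by (auto simp: long_cycle_def g)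

lemma long_cycle_permutes: assumes n: "1 \<le> n" shows "long_cycle n permutes {1..n}"
proof -
  define g where "g i = (if 1 < i \<and> i \<le> n then i - 1 else if i = 1 then n else i)" for i
  have g1: "\<forall>x. g (long_cycle n x) = x" and g2: "\<forall>x. long_cycle n (g x) = x"
    using lc_inv[OF n, of g] g_def by auto
  have u: "\<exists>!x. long_cycle n x = y" for y
  proof
    show "long_cycle n (g y) = y" using g2 by simp
    fix x assume "long_cycle n x = y"
    then have "g (long_cycle n x) = g y" by simp
    then show "x = g y" using g1 by simp
  qed
  have "\<forall>x. x \<notin> {1..n} \<longrightarrow> long_cycle n x = x" using n by (auto simp: long_cycle_def)
  then show ?thesis unfolding permutes_def using u by blast
qed

lemma tp_permutes: "is_transp n t \<Longrightarrow> transp_perm t permutes {1..n}"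
  unfolding transp_perm_def is_transp_def by (intro permutes_swap_id) auto

lemma Qf_permutes:
  assumes "\<forall>t\<in>set ts. is_transp n t" "1 \<le> n" shows "m \<le> length ts \<Longrightarrow> Qf ts n m permutes {1..n}"
proof (induction m)
  case 0 then show ?case using long_cycle_permutes[OF assms(2)] by (simp add: Qf_def)
next
  case (Suc m)
  then have "is_transp n (ts!m)" using assms by auto
  then have "transp_perm (ts!m) \<circ> Qf ts n m permutes {1..n}"
    using Suc by (intro permutes_compose tp_permutes) auto
  moreover have "m < length ts" using Suc by simp
  ultimately show ?case by (simp only: Qf_Suc)
qed

lemma condC_mono: "condC ts m \<Longrightarrow> j \<le> m \<Longrightarrow> condC ts j" by (auto simp: condC_def)

lemma key_inv:
  assumes tr: "\<forall>t\<in>set ts. is_transp n t" and so: "sorted (map fst ts)"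
  shows "m \<le> length ts \<Longrightarrow> condC ts m \<Longrightarrow> x \<in> {1..n} \<Longrightarrow> Qf ts n m x = nxt (cls n ts m x) x"
proof (induction m arbitrary: x)
  case 0
  have c0: "\<And>x. cls n ts 0 x = {1..n}" by (auto simp: cls_def)
  show ?case
  proof (cases "x < n")
    case True
    then have "nxt {1..n} x = x + 1" using 0 by (intro nxt_eqI) auto
    then show ?thesis using True 0 by (simp add: Qf_def c0 long_cycle_def)
  next
    case False
    then have xn: "x = n" using 0 by auto
    have "nxt {1..n} x = Min {1..n}" using xn by (intro nxt_N) auto
    also have "\<dots> = 1" using xn 0 by (intro Min_eqI) auto
    finally show ?thesis using xn 0 by (simp add: Qf_def c0 long_cycle_def)
  qed
next
  case (Suc m)
  have ml: "m < length ts" using Suc by simp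
  have cm: "condC ts m" using Suc.prems(2) condC_mono by fastforce
  define a where "a = fst (ts!m)"
  define b where "b = snd (ts!m)"
  have tm: "is_transp n (ts!m)" using tr ml by auto
  have ab: "1 \<le> a" "a < b" "b \<le> n" using tm by (auto simp: is_transp_def a_def b_def)
  have Ivm: "Iv (ts!m) = {a..<b}" by (simp add: Iv_def a_def b_def)
  define C0 where "C0 = cls n ts m a"
  have F1: "y \<in> C0" if y: "y \<in> {1..n}" "a \<le> y" "y \<le> b" for y
  proof -
    have "\<forall>l<m. (a \<in> Iv (ts!l) \<longleftrightarrow> y \<in> Iv (ts!l))"
    proof (intro allI impI)
      fix l assume lm: "l < m"
      have fl: "fst (ts!l) \<le> a" using sorted_nth_mono[OF so, of l m] lm ml by (simp add: a_def)
      have "snd (ts!l) \<le> a \<or> b < snd (ts!l)"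
        using Suc.prems(2) lm unfolding condC_def a_def b_def by auto
      then show "a \<in> Iv (ts!l) \<longleftrightarrow> y \<in> Iv (ts!l)"
      proof
        assume "snd (ts!l) \<le> a"
        then have "a \<notin> Iv (ts!l)" "y \<notin> Iv (ts!l)" using y by (auto simp: Iv_def)
        then show ?thesis by simp
      next
        assume "b < snd (ts!l)"
        then have "a \<in> Iv (ts!l)" "y \<in> Iv (ts!l)" using y fl ab by (auto simp: Iv_def)
        then show ?thesis by simp
      qed
    qed
    then show ?thesis using y by (simp add: C0_def cls_def)
  qed
  have aC: "a \<in> C0" and bC: "b \<in> C0" using F1 ab by auto
  have Qs: "Qf ts n (Suc m) x = transpose a b (nxt (cls n ts m x) x)"
    using Qf_Suc[OF ml] Suc.IH[OF _ cm Suc.prems(3)] ml by (simp add: transp_perm_def a_def b_def)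
  show ?case
  proof (cases "a \<in> cls n ts m x")
    case True
    then have eq: "cls n ts m x = C0" unfolding C0_def using cls3[OF True] by simp
    have xC: "x \<in> C0" using eq cls1[OF Suc.prems(3), of ts m] by simp
    show ?thesis unfolding Qs cls_Suc Ivm eq
      by (rule nxt_split[OF _ aC bC ab(2) xC]) (simp add: C0_def cls_fin)
  next
    case False
    have nin: "nxt (cls n ts m x) x \<in> cls n ts m x"
      using nxt_in[OF cls_fin] cls1 Suc.prems(3) by blast
    have "nxt (cls n ts m x) x \<noteq> a" using nin False by auto
    moreover have "nxt (cls n ts m x) x \<noteq> b"
    proof
      assume "nxt (cls n ts m x) x = b"
      then have "cls n ts m b = cls n ts m x" using nin cls3[of b n ts m x] by simp
      moreover have "cls n ts m b = C0" using bC cls3[of b n ts m a] C0_def by simp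
      ultimately show False using False aC by auto
    qed
    ultimately have t1: "transpose a b (nxt (cls n ts m x) x) = nxt (cls n ts m x) x" by simp
    have dis: "y \<notin> cls n ts m x" if "y \<in> {a..<b}" for y
    proof
      assume yc: "y \<in> cls n ts m x"
      have "y \<in> {1..n}" using yc cls2 by blast
      then have "y \<in> C0" using that F1 by auto
      then have "cls n ts m y = C0" using cls3[of y n ts m a] C0_def by simp
      moreover have "cls n ts m y = cls n ts m x" using cls3[OF yc] .
      ultimately show False using False aC by simp
    qed
    have "x \<notin> {a..<b}" using dis cls1 Suc.prems(3) by blast
    then have xI: "x \<notin> Iv (ts!m)" using Ivm by simp
    have "cls n ts m x - {a..<b} = cls n ts m x" using dis by blast
    moreover have "cls n ts (Suc m) x = cls n ts m x - Iv (ts!m)" by (simp add: cls_Suc xI)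
    ultimately have "cls n ts (Suc m) x = cls n ts m x" using Ivm by simp
    then show ?thesis using Qs t1 by simp
  qed
qed

lemma F1:
  assumes tr: "\<forall>t\<in>set ts. is_transp n t" and so: "sorted (map fst ts)"
    and ml: "m < length ts" and cC: "condC ts (Suc m)"
    and y: "y \<in> {1..n}" "fst (ts!m) \<le> y" "y \<le> snd (ts!m)"
  shows "y \<in> cls n ts m (fst (ts!m))"
proof -
  define a where "a = fst (ts!m)"
  define b where "b = snd (ts!m)"
  have tm: "is_transp n (ts!m)" using tr ml by auto
  have ab: "1 \<le> a" "a < b" "b \<le> n" using tm by (auto simp: is_transp_def a_def b_def)
  have "\<forall>l<m. (a \<in> Iv (ts!l) \<longleftrightarrow> y \<in> Iv (ts!l))"
  proof (intro allI impI)
    fix l assume lm: "l < m"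
    have fl: "fst (ts!l) \<le> a" using sorted_nth_mono[OF so, of l m] lm ml by (simp add: a_def)
    have "snd (ts!l) \<le> a \<or> b < snd (ts!l)"
      using cC lm unfolding condC_def a_def b_def by auto
    then show "a \<in> Iv (ts!l) \<longleftrightarrow> y \<in> Iv (ts!l)"
    proof
      assume "snd (ts!l) \<le> a"
      then have "a \<notin> Iv (ts!l)" "y \<notin> Iv (ts!l)" using y by (auto simp: Iv_def a_def)
      then show ?thesis by simp
    next
      assume "b < snd (ts!l)"
      then have "a \<in> Iv (ts!l)" "y \<in> Iv (ts!l)" using y fl ab by (auto simp: Iv_def a_def b_def)
      then show ?thesis by simp
    qed
  qed
  then show ?thesis using y by (simp add: a_def cls_def)
qed

lemma card_cls:
  assumes tr: "\<forall>t\<in>set ts. is_transp n t" and so: "sorted (map fst ts)" and n: "1 \<le> n"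
  shows "m \<le> length ts \<Longrightarrow> condC ts m \<Longrightarrow> card (cls n ts m ` {1..n}) = Suc m"
proof (induction m)
  case 0
  have "cls n ts 0 ` {1..n} = {{1..n}}" using n by (auto simp: cls_def)
  then show ?case by simp
next
  case (Suc m)
  have ml: "m < length ts" using Suc by simp
  have cm: "condC ts m" using Suc.prems(2) condC_mono by fastforce
  define a where "a = fst (ts!m)"
  define b where "b = snd (ts!m)"
  have tm: "is_transp n (ts!m)" using tr ml by auto
  have ab: "1 \<le> a" "a < b" "b \<le> n" using tm by (auto simp: is_transp_def a_def b_def)
  have Ivm: "Iv (ts!m) = {a..<b}" by (simp add: Iv_def a_def b_def)
  define C0 where "C0 = cls n ts m a"
  have FF: "y \<in> C0" if "y \<in> {1..n}" "a \<le> y" "y \<le> b" for y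
    using F1[OF tr so ml Suc.prems(2) that[unfolded a_def b_def]] by (simp add: C0_def a_def)
  have aC: "a \<in> C0" and bC: "b \<in> C0" using FF ab by auto
  define U where "U = cls n ts (Suc m) a"
  define V where "V = cls n ts (Suc m) b"
  have aI: "a \<in> Iv (ts!m)" and bI: "b \<notin> Iv (ts!m)" using Ivm ab by auto
  have Ueq: "U = C0 \<inter> Iv (ts!m)" using aI by (simp add: U_def cls_Suc C0_def)
  have cb: "cls n ts m b = C0" using cls3[OF bC[unfolded C0_def]] C0_def by simp
  have Veq: "V = C0 - Iv (ts!m)" using bI cb by (simp add: V_def cls_Suc)
  have aU: "a \<in> U" using aC aI Ueq by simp
  have bV: "b \<in> V" using bC bI Veq by simp
  have UV: "U \<noteq> V" using aU aI Veq by auto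
  have outside: "cls n ts (Suc m) x = cls n ts m x \<and> cls n ts m x \<noteq> C0"
    if x: "x \<in> {1..n}" "x \<notin> C0" for x
  proof -
    have ne: "cls n ts m x \<noteq> C0" using x cls1[OF x(1), of ts m] by auto
    have dis: "y \<notin> cls n ts m x" if "y \<in> {a..<b}" for y
    proof
      assume yc: "y \<in> cls n ts m x"
      have "y \<in> {1..n}" using yc cls2 by blast
      then have "y \<in> C0" using that FF by auto
      then have "cls n ts m y = C0" using cls3[of y n ts m a] C0_def by simp
      moreover have "cls n ts m y = cls n ts m x" using cls3[OF yc] .
      ultimately show False using ne by simp
    qed
    have "x \<notin> {a..<b}" using dis cls1 x(1) by blast
    then have xI: "x \<notin> Iv (ts!m)" using Ivm by simp
    have "cls n ts m x - {a..<b} = cls n ts m x" using dis by blast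
    moreover have "cls n ts (Suc m) x = cls n ts m x - Iv (ts!m)" by (simp add: cls_Suc xI)
    ultimately show ?thesis using Ivm ne by simp
  qed
  have inside: "cls n ts (Suc m) x \<in> {U, V}" if x: "x \<in> C0" for x
  proof -
    have "cls n ts m x = C0" using cls3[OF x[unfolded C0_def]] C0_def by simp
    then show ?thesis using Ueq Veq by (simp add: cls_Suc)
  qed
  define X where "X = cls n ts m ` {1..n}"
  have C0X: "C0 \<in> X" using ab by (auto simp: X_def C0_def)
  have img: "cls n ts (Suc m) ` {1..n} = (X - {C0}) \<union> {U, V}"
  proof (intro equalityI subsetI)
    fix D assume "D \<in> cls n ts (Suc m) ` {1..n}"
    then obtain x where x: "x \<in> {1..n}" "D = cls n ts (Suc m) x" by blast
    show "D \<in> (X - {C0}) \<union> {U, V}"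
    proof (cases "x \<in> C0")
      case True then show ?thesis using inside x by auto
    next
      case False then show ?thesis using outside[OF x(1) False] x by (auto simp: X_def)
    qed
  next
    fix D assume D: "D \<in> (X - {C0}) \<union> {U, V}"
    show "D \<in> cls n ts (Suc m) ` {1..n}"
    proof (cases "D \<in> {U, V}")
      case True then show ?thesis using ab U_def V_def by auto
    next
      case False
      then have "D \<in> X" "D \<noteq> C0" using D by blast+
      then obtain x where x: "x \<in> {1..n}" "D = cls n ts m x" "D \<noteq> C0" unfolding X_def by blast
      have "x \<notin> C0"
      proof
        assume "x \<in> C0"
        then have "cls n ts m x = C0" using cls3[of x n ts m a] C0_def by simp
        then show False using x by simp
      qed
      then show ?thesis using outside[OF x(1)] x by auto
    qed
  qed
  have finX: "finite X" by (simp add: X_def)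
  have UX: "U \<notin> X - {C0}"
  proof
    assume W: "U \<in> X - {C0}"
    then have "U \<in> X" "U \<noteq> C0" by blast+
    then obtain y where y: "y \<in> {1..n}" "U = cls n ts m y" "U \<noteq> C0" unfolding X_def by blast
    then have "cls n ts m a = cls n ts m y" using aU cls3[of a n ts m y] by simp
    then show False using y C0_def by simp
  qed
  have VX: "V \<notin> X - {C0}"
  proof
    assume W: "V \<in> X - {C0}"
    then have "V \<in> X" "V \<noteq> C0" by blast+
    then obtain y where y: "y \<in> {1..n}" "V = cls n ts m y" "V \<noteq> C0" unfolding X_def by blast
    then have "cls n ts m b = cls n ts m y" using bV cls3[of b n ts m y] by simp
    then show False using y cb by simp
  qed
  have "card ((X - {C0}) \<union> {U, V}) = card (X - {C0}) + card {U, V}"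
    using UX VX finX by (intro card_Un_disjoint) auto
  also have "\<dots> = (card X - 1) + 2" using UV C0X finX by simp
  also have "card X = Suc m" using Suc.IH[OF _ cm] ml X_def by simp
  finally show ?case using img by simp
qed

lemma nc_Qf:
  assumes tr: "\<forall>t\<in>set ts. is_transp n t" and so: "sorted (map fst ts)"
    and m: "m \<le> length ts" and c: "condC ts m"
  shows "num_cycles n (Qf ts n m) = card (cls n ts m ` {1..n})"
    and "x \<in> {1..n} \<Longrightarrow> orbit (Qf ts n m) x = cls n ts m x"
proof -
  have o: "orbit (Qf ts n m) x = cls n ts m x" if "x \<in> {1..n}" for x
    using that
    by (intro orbit_nxt[where S="{1..n}"] cls1 cls2 cls3 key_inv[OF tr so m c]) auto
  then show "x \<in> {1..n} \<Longrightarrow> orbit (Qf ts n m) x = cls n ts m x" .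
  show "num_cycles n (Qf ts n m) = card (cls n ts m ` {1..n})"
    unfolding num_cycles_def using o by (metis (no_types, lifting) image_cong)
qed

definition rprod :: "(nat\<times>nat) list \<Rightarrow> nat \<Rightarrow> nat" where
  "rprod ts = foldl (\<lambda>acc t. transp_perm t \<circ> acc) id ts"

lemma foldl_comp: fixes g :: "nat \<Rightarrow> nat" shows "foldl (\<lambda>acc t. transp_perm t \<circ> acc) g ts = rprod ts \<circ> g"
  unfolding rprod_def
proof (induction ts arbitrary: g)
  case Nil then show ?case by simp
next
  case (Cons t ts)
  have "foldl (\<lambda>acc t. transp_perm t \<circ> acc) g (t # ts) = foldl (\<lambda>acc t. transp_perm t \<circ> acc) (transp_perm t \<circ> g) ts"
    by (simp only: foldl.simps)
  also have "\<dots> = foldl (\<lambda>acc t. transp_perm t \<circ> acc) id ts \<circ> (transp_perm t \<circ> g)"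
    by (rule Cons.IH)
  finally have 1: "foldl (\<lambda>acc t. transp_perm t \<circ> acc) g (t # ts) = foldl (\<lambda>acc t. transp_perm t \<circ> acc) id ts \<circ> (transp_perm t \<circ> g)" .
  have "foldl (\<lambda>acc t. transp_perm t \<circ> acc) id (t # ts) = foldl (\<lambda>acc t. transp_perm t \<circ> acc) (transp_perm t) ts"
    by (simp only: foldl.simps comp_id)
  also have "\<dots> = foldl (\<lambda>acc t. transp_perm t \<circ> acc) id ts \<circ> transp_perm t"
    by (rule Cons.IH[of "transp_perm t"])
  finally show ?case using 1 by (simp only: o_assoc)
qed

lemma tp_invol: "transp_perm t \<circ> transp_perm t = id"
  by (simp add: transp_perm_def)

lemma prod_Cons: "prod_transps (t # ts) = transp_perm t \<circ> prod_transps ts"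
  by (simp add: prod_transps_def)

lemma rprod_Cons: "rprod (t # ts) = rprod ts \<circ> transp_perm t"
  using foldl_comp[of "transp_perm t" ts] by (simp add: rprod_def)

lemma prod_rprod: "prod_transps ts \<circ> rprod ts = id \<and> rprod ts \<circ> prod_transps ts = id"
proof (induction ts)
  case Nil then show ?case by (simp add: prod_transps_def rprod_def)
next
  case (Cons t ts)
  have i1a: "prod_transps ts \<circ> rprod ts = id" using Cons.IH by (rule conjunct1)
  have i1b: "rprod ts \<circ> prod_transps ts = id" using Cons.IH by (rule conjunct2)
  note i1 = i1a i1b
  have "prod_transps (t#ts) \<circ> rprod (t#ts) = transp_perm t \<circ> (prod_transps ts \<circ> rprod ts) \<circ> transp_perm t"
    by (simp only: prod_Cons rprod_Cons o_assoc)
  also have "\<dots> = id" by (simp only: i1 comp_id tp_invol)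
  finally have 1: "prod_transps (t#ts) \<circ> rprod (t#ts) = id" .
  have "rprod (t#ts) \<circ> prod_transps (t#ts) = rprod ts \<circ> (transp_perm t \<circ> transp_perm t) \<circ> prod_transps ts"
    by (simp only: prod_Cons rprod_Cons o_assoc)
  also have "\<dots> = id" by (simp only: i1 comp_id tp_invol)
  finally show ?case using 1 by simp
qed

lemma inv_prod_c: "inv (prod_transps ts) \<circ> long_cycle n = Qf ts n (length ts)"
proof -
  have "inv (prod_transps ts) = rprod ts" using prod_rprod[of ts] by (intro inv_unique_comp) auto
  then show ?thesis by (simp add: Qf_def foldl_comp)
qed

lemma prod_permutes: "\<forall>t\<in>set ts. is_transp n t \<Longrightarrow> prod_transps ts permutes {1..n}"
proof (induction ts)
  case Nil
  have e: "prod_transps [] = id" by (simp add: prod_transps_def)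
  show ?case unfolding e by (rule permutes_id)
next
  case (Cons t ts)
  then have "transp_perm t \<circ> prod_transps ts permutes {1..n}"
    by (intro permutes_compose tp_permutes) auto
  then show ?case by (simp only: prod_Cons)
qed

lemma prod_inv_set: "\<forall>t\<in>set ts. transp_perm t ` A \<subseteq> A \<Longrightarrow> prod_transps ts ` A \<subseteq> A"
proof (induction ts)
  case Nil then show ?case by (simp add: prod_transps_def)
next
  case (Cons t ts)
  then have "prod_transps ts ` A \<subseteq> A" "transp_perm t ` A \<subseteq> A" by auto
  then show ?case unfolding prod_Cons image_comp[symmetric] by blast
qed

lemma orbit_inv_set: "f ` A \<subseteq> A \<Longrightarrow> x \<in> A \<Longrightarrow> orbit f x \<subseteq> A"
proof
  fix y assume fA: "f ` A \<subseteq> A" and x: "x \<in> A" and "y \<in> orbit f x"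
  from \<open>y \<in> orbit f x\<close> show "y \<in> A"
  proof induction
    case base then show ?case using fA x by auto
  next
    case (step y) then show ?case using fA by auto
  qed
qed

lemma nc_id: "num_cycles n id = n"
proof -
  have "orbit id x = {x}" for x :: nat by (simp add: orbit_eq_singleton_iff)
  then have "orbit id ` {1..n} = (\<lambda>x. {x}) ` {1..n}" by simp
  moreover have "card ((\<lambda>x::nat. {x}) ` {1..n}) = n" by (subst card_image) (auto simp: inj_on_def)
  ultimately show ?thesis by (simp add: num_cycles_def)
qed

lemma condC_Cons: "condC (t # ts) (Suc (length ts)) \<Longrightarrow> condC ts (length ts)"
  unfolding condC_def
proof (intro allI impI)
  fix l j assume H: "\<forall>l j. l < j \<and> j < Suc (length ts) \<longrightarrow>
      snd ((t # ts) ! l) \<le> fst ((t # ts) ! j) \<or> snd ((t # ts) ! j) < snd ((t # ts) ! l)"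
    and lj: "l < j \<and> j < length ts"
  then show "snd (ts ! l) \<le> fst (ts ! j) \<or> snd (ts ! j) < snd (ts ! l)"
    using H[rule_format, of "Suc l" "Suc j"] by simp
qed

lemma nc_prod:
  assumes n: "1 \<le> n"
  shows "\<forall>t\<in>set ts. is_transp n t \<Longrightarrow> sorted (map fst ts) \<Longrightarrow> condC ts (length ts)
    \<Longrightarrow> num_cycles n (prod_transps ts) + length ts = n"
proof (induction ts)
  case Nil
  have e: "prod_transps [] = id" by (simp add: prod_transps_def)
  show ?case by (simp only: e nc_id list.size add_0_right)
next
  case (Cons t ts)
  have tr: "\<forall>t\<in>set ts. is_transp n t" using Cons.prems by simp
  have so: "sorted (map fst ts)" using Cons.prems by simp
  have cc: "condC ts (length ts)" using condC_Cons Cons.prems(3) by simp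
  have IH: "num_cycles n (prod_transps ts) + length ts = n" using Cons.IH tr so cc by simp
  define a where "a = fst t"
  define b where "b = snd t"
  have ab: "1 \<le> a" "a < b" "b \<le> n" using Cons.prems(1) by (auto simp: is_transp_def a_def b_def)
  define A where "A = {a..<b}"
  have inv1: "transp_perm t' ` A \<subseteq> A" if t': "t' \<in> set ts" for t'
  proof -
    obtain j where j: "j < length ts" "t' = ts ! j" using t' by (auto simp: in_set_conv_nth)
    have aj: "a \<le> fst t'" using Cons.prems(2) t' by (simp add: a_def)
    have "snd t \<le> fst t' \<or> snd t' < snd t"
    proof -
      have "0 < Suc j \<and> Suc j < length (t # ts) \<longrightarrow>
          snd ((t # ts) ! 0) \<le> fst ((t # ts) ! Suc j) \<or> snd ((t # ts) ! Suc j) < snd ((t # ts) ! 0)"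
        using Cons.prems(3) unfolding condC_def by blast
      then show ?thesis using j by simp
    qed
    then have d: "b \<le> fst t' \<or> snd t' < b" by (simp add: b_def)
    have lt: "fst t' < snd t'" using tr t' by (auto simp: is_transp_def)
    show ?thesis
    proof
      fix y assume "y \<in> transp_perm t' ` A"
      then obtain x where x: "x \<in> A" "y = transpose (fst t') (snd t') x" by (auto simp: transp_perm_def)
      show "y \<in> A"
      proof (cases "x = fst t' \<or> x = snd t'")
        case True then show ?thesis using x d aj lt by (auto simp: A_def)
      next
        case False then show ?thesis using x by simp
      qed
    qed
  qed
  have "prod_transps ts ` A \<subseteq> A" using inv1 by (intro prod_inv_set) auto
  then have "orbit (prod_transps ts) a \<subseteq> A" using ab by (intro orbit_inv_set) (auto simp: A_def)
  then have nb: "b \<notin> orbit (prod_transps ts) a" by (auto simp: A_def)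
  have pts: "prod_transps ts permutes {1..n}" using prod_permutes tr by blast
  have pts2: "prod_transps (t#ts) permutes {1..n}" using prod_permutes Cons.prems(1) by blast
  have eq1: "prod_transps (t#ts) = transpose a b \<circ> prod_transps ts"
    by (simp add: prod_Cons transp_perm_def a_def b_def)
  have eq2: "prod_transps ts = transpose a b \<circ> prod_transps (t#ts)"
    unfolding eq1 by (simp only: o_assoc transpose_comp_involutory id_comp)
  have c1: "num_cycles n (prod_transps (t#ts)) + 1 \<le> num_cycles n (prod_transps ts)"
    unfolding num_cycles_def using count_G(2)[OF pts _ _ _ _ eq1 nb] ab by simp
  have c2: "num_cycles n (prod_transps ts) \<le> num_cycles n (prod_transps (t#ts)) + 1"
    unfolding num_cycles_def using count_G(1)[OF pts2 _ _ _ _ eq2] ab by simp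
  show ?case using c1 c2 IH by simp
qed

lemma nc_steps:
  assumes tr: "\<forall>t\<in>set ts. is_transp n t" and n: "1 \<le> n"
  shows "j \<le> length ts \<Longrightarrow> i \<le> j \<Longrightarrow> num_cycles n (Qf ts n j) \<le> num_cycles n (Qf ts n i) + (j - i)"
proof (induction j)
  case 0 then show ?case by simp
next
  case (Suc j)
  show ?case
  proof (cases "i = Suc j")
    case True then show ?thesis by simp
  next
    case False
    then have ij: "i \<le> j" using Suc by simp
    have jl: "j < length ts" using Suc by simp
    have IH: "num_cycles n (Qf ts n j) \<le> num_cycles n (Qf ts n i) + (j - i)" using Suc ij by simp
    have tj: "is_transp n (ts!j)" using tr jl by auto
    have pj: "Qf ts n j permutes {1..n}" using Qf_permutes[OF tr n] jl by simp
    have eq: "Qf ts n (Suc j) = transpose (fst (ts!j)) (snd (ts!j)) \<circ> Qf ts n j"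
      using Qf_Suc[OF jl] by (simp add: transp_perm_def)
    have "num_cycles n (Qf ts n (Suc j)) \<le> num_cycles n (Qf ts n j) + 1"
      unfolding num_cycles_def using count_G(1)[OF pj _ _ _ _ eq] tj by (simp add: is_transp_def)
    then show ?thesis using IH ij by simp
  qed
qed

lemma nc_le: "num_cycles n f \<le> n"
  unfolding num_cycles_def using card_image_le[of "{1..n}" "orbit f"] by simp

lemma nc_ge: assumes "1 \<le> n" shows "1 \<le> num_cycles n f"
proof -
  have "orbit f ` {1..n} \<noteq> {}" using assms by auto
  then show ?thesis unfolding num_cycles_def by (simp add: Suc_le_eq card_gt_0_iff)
qed

theorem proposition3p5:
  fixes n k :: nat and ts :: "(nat \<times> nat) list"
  assumes "n \<ge> 1" and "k \<ge> 1"
    and "length ts = k"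
    and "\<forall>t\<in>set ts. is_transp n t"
    and "sorted (map fst ts)"
  shows "ts \<in> Sigma_n n k \<longleftrightarrow>
    (\<forall>l m. l < m \<and> m < k \<longrightarrow>
       snd (ts ! l) \<le> fst (ts ! m) \<or> snd (ts ! l) > snd (ts ! m))"
proof -
  note n = assms(1) and len = assms(3) and tr = assms(4) and so = assms(5)
  have cond_eq: "(\<forall>l m. l < m \<and> m < k \<longrightarrow>
       snd (ts ! l) \<le> fst (ts ! m) \<or> snd (ts ! l) > snd (ts ! m)) = condC ts k"
    unfolding condC_def by auto
  define P where "P = prod_transps ts"
  define Q where "Q = Qf ts n k"
  have PQ: "inv P \<circ> long_cycle n = Q" unfolding P_def Q_def using inv_prod_c[of ts n] len by simp
  have Q0: "Qf ts n 0 = long_cycle n" by (simp add: Qf_def)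
  have c0: "condC ts 0" by (simp add: condC_def)
  have ncc: "num_cycles n (long_cycle n) = 1"
    using nc_Qf(1)[OF tr so _ c0] card_cls[OF tr so n _ c0] Q0 by simp
  have plc: "perm_len n (long_cycle n) = n - 1" by (simp add: perm_len_def ncc)
  have "ts \<in> Sigma_n n k \<longleftrightarrow> perm_len n P = k \<and> perm_len n (long_cycle n) = perm_len n P + perm_len n Q"
    using len tr unfolding Sigma_n_def perm_le_def P_def PQ[symmetric] by auto
  also have "\<dots> \<longleftrightarrow> condC ts k"
  proof
    assume A: "perm_len n P = k \<and> perm_len n (long_cycle n) = perm_len n P + perm_len n Q"
    then have "n - 1 = k + (n - num_cycles n Q)" using plc by (simp add: perm_len_def)
    then have ncQ: "num_cycles n Q = Suc k" using nc_le[of n Q] n by linarith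
    show "condC ts k"
    proof (rule ccontr)
      assume nc: "\<not> condC ts k"
      define j where "j = (LEAST j. \<not> condC ts j)"
      have nj: "\<not> condC ts j" unfolding j_def using nc by (rule LeastI)
      have jk: "j \<le> k" unfolding j_def using nc by (rule Least_le)
      have j0: "j \<noteq> 0"
      proof
        assume "j = 0" then show False using nj c0 by simp
      qed
      define m where "m = j - 1"
      have mj: "j = Suc m" using j0 m_def by simp
      have cm: "condC ts m" unfolding m_def using not_less_Least[of "j - 1" "\<lambda>j. \<not> condC ts j"] j0 j_def by simp
      have mk: "m < k" using jk mj by simp
      obtain l where lm: "l < m" and fail: "\<not> (snd (ts!l) \<le> fst (ts!m) \<or> snd (ts!m) < snd (ts!l))"
      proof -
        obtain l j' where lj: "l < j'" "j' < Suc m" and f: "\<not> (snd (ts!l) \<le> fst (ts!j') \<or> snd (ts!j') < snd (ts!l))"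
          using nj mj unfolding condC_def by auto
        have "j' = m" using lj f cm unfolding condC_def by (metis less_SucE)
        then show ?thesis using that lj f by auto
      qed
      have ml: "m < length ts" using mk len by simp
      define a where "a = fst (ts!m)"
      define b where "b = snd (ts!m)"
      have tm: "is_transp n (ts!m)" using tr ml by auto
      have ab: "1 \<le> a" "a < b" "b \<le> n" using tm by (auto simp: is_transp_def a_def b_def)
      have fl: "fst (ts!l) \<le> a" using sorted_nth_mono[OF so, of l m] lm ml by (simp add: a_def)
      have aI: "a \<in> Iv (ts!l)" using fail fl by (auto simp: Iv_def a_def)
      have bI: "b \<notin> Iv (ts!l)" using fail by (auto simp: Iv_def b_def)
      have "b \<notin> cls n ts m a" using aI bI lm unfolding cls_def by auto
      moreover have "orbit (Qf ts n m) a = cls n ts m a"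
        using nc_Qf(2)[OF tr so _ cm] ml ab by simp
      ultimately have nb: "b \<notin> orbit (Qf ts n m) a" by simp
      have pm: "Qf ts n m permutes {1..n}" using Qf_permutes[OF tr n] ml by simp
      have eq: "Qf ts n (Suc m) = transpose a b \<circ> Qf ts n m"
        using Qf_Suc[OF ml] by (simp add: transp_perm_def a_def b_def)
      have "num_cycles n (Qf ts n (Suc m)) + 1 \<le> num_cycles n (Qf ts n m)"
        unfolding num_cycles_def using count_G(2)[OF pm _ _ _ _ eq nb] ab by simp
      moreover have "num_cycles n (Qf ts n m) = Suc m"
        using nc_Qf(1)[OF tr so _ cm] card_cls[OF tr so n _ cm] ml by simp
      moreover have "num_cycles n Q \<le> num_cycles n (Qf ts n (Suc m)) + (k - Suc m)"
        unfolding Q_def using nc_steps[OF tr n, of k "Suc m"] mk len by simp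
      ultimately show False using ncQ mk by simp
    qed
  next
    assume C: "condC ts k"
    have ncP: "num_cycles n P + k = n" unfolding P_def using nc_prod[OF n tr so] C len by simp
    have ncQ: "num_cycles n Q = Suc k"
      unfolding Q_def using nc_Qf(1)[OF tr so _ C] card_cls[OF tr so n _ C] len by simp
    have "1 \<le> num_cycles n P" using nc_ge[OF n] .
    then show "perm_len n P = k \<and> perm_len n (long_cycle n) = perm_len n P + perm_len n Q"
      using ncP ncQ plc by (simp add: perm_len_def)
  qed
  finally show ?thesis using cond_eq by simp
qed

end
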